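(* Let $n,k$ be positive integers with $n\ge k$ and let $1\le i\le n-k$. Let $a_{n,k}^{(i)}$ be the coefficient of $z^i$ in $\mathrm{JS}_n^k(z)$. Then $a_{n,k}^{(i)}$ is the number of ordered pairs $(Q_1,Q_2)$ of simply hooked $k$-quasi-permutations of $[n]$ such that $$Q_1^-=Q_2^-,\qquad |Q_1^-|=|Q_2^-|=i,\qquad \mathrm{pr}_y(Q_1)=\mathrm{pr}_y(Q_2).$$
   Context: $\mathrm{JS}_n^k(z)$ is defined by $\mathrm{JS}_0^0(z)=1$, $\mathrm{JS}_n^k(z)=0$ if $k\notin\{1,\dots,n\}$ (for $(n,k)\neq(0,0)$), and $\mathrm{JS}_n^k(z)=\mathrm{JS}_{n-1}^{k-1}(z)+k(k+z)\mathrm{JS}_{n-1}^k(z)$ for $n,k\ge1$. Let $[n]=\{1,\dots,n\}$. A permutation $\sigma$ of $[n]$ is identified with its diagram $\mathcal D(\sigma)=\{(i,\sigma(i)):i\in[n]\}$. For $\alpha=(i,j)\in[n]\times[n]$ put $\mathrm{pr}_x(\alpha)=i$, $\mathrm{pr}_y(\alpha)=j$, and for $Q\subseteq[n]\times[n]$ put $\mathrm{pr}_x(Q)=\{\mathrm{pr}_x(\alpha):\alpha\in Q\}$, $\mathrm{pr}_y(Q)=\{\mathrm{pr}_y(\alpha):\alpha\in Q\}$, $Q^+=\{(i,j)\in Q:i\le j\}$, $Q^-=\{(i,j)\in Q:i\ge j\}$. A simply hooked $k$-quasi-permutation of $[n]$ is a subset $Q\subseteq[n]\times[n]$ such that (i)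 $Q\subseteq\mathcal D(\sigma)$ for some permutation $\sigma$ of $[n]$, and (ii) $|Q|=n-k$ and $\mathrm{pr}_x(Q^-)\cap\mathrm{pr}_y(Q^+)=\emptyset$. *)

theory Defs
  imports "HOL-Computational_Algebra.Polynomial" "HOL-Combinatorics.Permutations"
begin

fun JS :: "nat \<Rightarrow> nat \<Rightarrow> int poly" where
  "JS 0 k = (if k = 0 then 1 else 0)"
| "JS (Suc n) k = (if k = 0 \<or> k > Suc n then 0
     else JS n (k - 1) + smult (int k) ([:int k, 1:] * JS n k))"

definition diagram :: "nat \<Rightarrow> (nat \<Rightarrow> nat) \<Rightarrow> (nat \<times> nat) set" where
  "diagram n \<sigma> = {(i, \<sigma> i) | i. i \<in> {1..n}}"

definition prx :: "(nat \<times> nat) set \<Rightarrow> nat set" where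
  "prx Q = fst ` Q"

definition pry :: "(nat \<times> nat) set \<Rightarrow> nat set" where
  "pry Q = snd ` Q"

definition Qplus :: "(nat \<times> nat) set \<Rightarrow> (nat \<times> nat) set" where
  "Qplus Q = {(i, j) \<in> Q. i \<le> j}"

definition Qminus :: "(nat \<times> nat) set \<Rightarrow> (nat \<times> nat) set" where
  "Qminus Q = {(i, j) \<in> Q. i \<ge> j}"

definition simply_hooked_qperm :: "nat \<Rightarrow> nat \<Rightarrow> (nat \<times> nat) set \<Rightarrow> bool" where
  "simply_hooked_qperm n k Q \<longleftrightarrow>
     (\<exists>\<sigma>. \<sigma> permutes {1..n} \<and> Q \<subseteq> diagram n \<sigma>) \<and>
     card Q = n - k \<and> prx (Qminus Q) \<inter> pry (Qplus Q) = {}"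

end

theory Submission
  imports Defs
begin


definition hooked :: "(nat \<times> nat) set \<Rightarrow> bool" where
 "hooked Q \<longleftrightarrow> (\<forall>p\<in>Q. \<forall>q\<in>Q. snd p \<le> fst p \<longrightarrow> fst q \<le> snd q \<longrightarrow> fst p \<noteq> snd q)"

lemma hooked_iff: "prx (Qminus Q) \<inter> pry (Qplus Q) = {} \<longleftrightarrow> hooked Q"
  unfolding hooked_def prx_def pry_def Qminus_def Qplus_def by fastforce

lemma perm_iff: "(\<exists>\<sigma>. \<sigma> permutes {1..n} \<and> Q \<subseteq> diagram n \<sigma>) \<longleftrightarrow>
   (Q \<subseteq> {1..n}\<times>{1..n} \<and> inj_on fst Q \<and> inj_on snd Q)"
proof
  assume "\<exists>\<sigma>. \<sigma> permutes {1..n} \<and> Q \<subseteq> diagram n \<sigma>"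
  then obtain \<sigma> where s: "\<sigma> permutes {1..n}" "Q \<subseteq> diagram n \<sigma>" by blast
  have d: "\<And>p. p\<in>Q \<Longrightarrow> fst p \<in> {1..n} \<and> snd p = \<sigma> (fst p)" using s(2) unfolding diagram_def by auto
  have "inj \<sigma>" using s(1) by (rule permutes_inj)
  show "Q \<subseteq> {1..n}\<times>{1..n} \<and> inj_on fst Q \<and> inj_on snd Q"
  proof (intro conjI)
    show "Q \<subseteq> {1..n}\<times>{1..n}"
    proof
      fix p assume "p \<in> Q"
      with d[OF this] permutes_in_image[OF s(1)] show "p \<in> {1..n}\<times>{1..n}"
        by (cases p) auto
    qed
    show "inj_on fst Q" by (rule inj_onI) (metis d prod_eqI)
    show "inj_on snd Q" using \<open>inj \<sigma>\<close> by (intro inj_onI) (metis d prod_eqI injD)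
  qed
next
  assume h: "Q \<subseteq> {1..n}\<times>{1..n} \<and> inj_on fst Q \<and> inj_on snd Q"
  let ?A = "{1..n} - fst`Q" and ?B = "{1..n} - snd`Q"
  have fin: "finite Q" using h finite_subset by blast
  have sf: "fst`Q \<subseteq> {1..n}" "snd`Q \<subseteq> {1..n}" using h by auto
  have "card (fst`Q) = card Q" "card (snd`Q) = card Q" using h card_image by blast+
  then have "card ?A = card ?B" using sf fin by (simp add: card_Diff_subset)
  then obtain hh where hb: "bij_betw hh ?A ?B" using finite_same_card_bij by blast
  define g where "g = snd \<circ> inv_into Q fst"
  have "bij_betw (inv_into Q fst) (fst`Q) Q"
    using h by (intro bij_betw_inv_into) (simp add: inj_on_imp_bij_betw)
  moreover have "bij_betw snd Q (snd`Q)" using h by (simp add: inj_on_imp_bij_betw)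
  ultimately have gb: "bij_betw g (fst`Q) (snd`Q)" unfolding g_def by (rule bij_betw_trans)
  define \<sigma> where "\<sigma> x = (if x \<in> fst`Q then g x else if x \<in> ?A then hh x else x)" for x
  have "bij_betw \<sigma> (fst`Q) (snd`Q)" using gb by (rule bij_betw_cong[THEN iffD1, rotated]) (simp add: \<sigma>_def)
  moreover have "bij_betw \<sigma> ?A ?B" using hb by (rule bij_betw_cong[THEN iffD1, rotated]) (simp add: \<sigma>_def)
  ultimately have "bij_betw \<sigma> (fst`Q \<union> ?A) (snd`Q \<union> ?B)" by (rule bij_betw_combine) auto
  moreover have "fst`Q \<union> ?A = {1..n}" "snd`Q \<union> ?B = {1..n}" using sf by auto
  ultimately have "bij_betw \<sigma> {1..n} {1..n}" by simp
  then have p: "\<sigma> permutes {1..n}" by (rule bij_imp_permutes) (use sf in \<open>auto simp: \<sigma>_def\<close>)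
  have "Q \<subseteq> diagram n \<sigma>"
  proof
    fix p assume pq: "p \<in> Q"
    obtain x y where [simp]: "p = (x,y)" by (cases p)
    have "inv_into Q fst x = (x,y)" using inv_into_f_f[of fst Q p] h pq by simp
    then have "\<sigma> x = y" using pq by (force simp: \<sigma>_def g_def)
    then show "p \<in> diagram n \<sigma>" using pq h unfolding diagram_def by force
  qed
  with p show "\<exists>\<sigma>. \<sigma> permutes {1..n} \<and> Q \<subseteq> diagram n \<sigma>" by blast
qed



definition PQ :: "nat \<Rightarrow> (nat \<times> nat) set \<Rightarrow> bool" where
 "PQ n Q \<longleftrightarrow> Q \<subseteq> {1..n}\<times>{1..n} \<and> inj_on fst Q \<and> inj_on snd Q \<and> hooked Q"

lemma sh_iff: "k \<le> n \<Longrightarrow> simply_hooked_qperm n k Q \<longleftrightarrow> PQ n Q \<and> card Q + k = n"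
  unfolding simply_hooked_qperm_def PQ_def perm_iff hooked_iff by auto

definition S :: "nat \<Rightarrow> nat \<Rightarrow> nat \<Rightarrow> ((nat \<times> nat) set \<times> (nat \<times> nat) set) set" where
 "S n k i = {(Q1,Q2). PQ n Q1 \<and> PQ n Q2 \<and> card Q1 + k = n \<and> card Q2 + k = n \<and>
     Qminus Q1 = Qminus Q2 \<and> card (Qminus Q1) = i \<and> pry Q1 = pry Q2}"

lemma PQ_finite: "PQ n Q \<Longrightarrow> finite Q"
  unfolding PQ_def using finite_subset by blast

lemma PQ_card: "PQ n Q \<Longrightarrow> card Q \<le> n"
proof -
  assume a: "PQ n Q"
  then have "card Q = card (fst`Q)" unfolding PQ_def by (simp add: card_image)
  also have "\<dots> \<le> card {1..n}" using a unfolding PQ_def by (intro card_mono) auto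
  finally show ?thesis by simp
qed

lemma S_finite: "finite (S n k i)"
proof -
  have "S n k i \<subseteq> Pow ({1..n}\<times>{1..n}) \<times> Pow ({1..n}\<times>{1..n})"
    unfolding S_def PQ_def by auto
  then show ?thesis by (rule finite_subset) auto
qed

lemma S_big: "n < k \<Longrightarrow> S n k i = {}" by (auto simp: S_def)

lemma S_0: "S 0 k i = (if k = 0 \<and> i = 0 then {({},{})} else {})"
proof -
  have e: "PQ 0 Q \<longleftrightarrow> Q = {}" for Q unfolding PQ_def hooked_def by auto
  have "S 0 k i = {(Q1,Q2). Q1 = {} \<and> Q2 = {} \<and> k = 0 \<and> i = 0}"
    unfolding S_def e by (auto simp: Qminus_def)
  also have "\<dots> = (if k = 0 \<and> i = 0 then {({},{})} else {})" by auto
  finally show ?thesis .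
qed

lemma hookedD: "hooked Q \<Longrightarrow> p\<in>Q \<Longrightarrow> q\<in>Q \<Longrightarrow> snd p \<le> fst p \<Longrightarrow> fst q \<le> snd q \<Longrightarrow> fst p \<noteq> snd q"
  unfolding hooked_def by blast

lemma hooked_subset: "hooked Q \<Longrightarrow> R \<subseteq> Q \<Longrightarrow> hooked R"
  unfolding hooked_def by blast

lemma hooked_insert: "hooked Q \<Longrightarrow> (snd p0 \<le> fst p0 \<Longrightarrow> \<forall>q\<in>Q. fst q \<le> snd q \<longrightarrow> fst p0 \<noteq> snd q) \<Longrightarrow>
   (fst p0 \<le> snd p0 \<Longrightarrow> \<forall>p\<in>Q. snd p \<le> fst p \<longrightarrow> fst p \<noteq> snd p0) \<Longrightarrow> fst p0 \<noteq> snd p0 \<Longrightarrow> hooked (insert p0 Q)"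
  unfolding hooked_def by auto

lemma PQ_mono: "PQ n Q \<Longrightarrow> PQ (Suc n) Q"
  unfolding PQ_def by auto

lemma PQ_box: "PQ n Q \<Longrightarrow> p \<in> Q \<Longrightarrow> 1 \<le> fst p \<and> fst p \<le> n \<and> 1 \<le> snd p \<and> snd p \<le> n"
  unfolding PQ_def by (cases p) auto

lemma PQ_shrink: assumes "PQ (Suc n) Q" "Suc n \<notin> fst`Q" "Suc n \<notin> snd`Q" shows "PQ n Q"
proof -
  have "Q \<subseteq> {1..n}\<times>{1..n}"
  proof
    fix p assume p: "p \<in> Q"
    have "fst p \<noteq> Suc n" "snd p \<noteq> Suc n" using p assms(2,3) by (metis image_eqI)+
    moreover have "1 \<le> fst p \<and> fst p \<le> Suc n \<and> 1 \<le> snd p \<and> snd p \<le> Suc n" using PQ_box[OF assms(1) p] .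
    ultimately show "p \<in> {1..n}\<times>{1..n}" by (cases p) simp
  qed
  then show ?thesis using assms(1) unfolding PQ_def by blast
qed

lemma PQ_notin: assumes "PQ n Q" shows "Suc n \<notin> fst`Q \<and> Suc n \<notin> snd`Q"
proof -
  have h: "fst p \<noteq> Suc n \<and> snd p \<noteq> Suc n" if "p \<in> Q" for p using PQ_box[OF assms that] by simp
  show ?thesis
  proof (intro conjI notI)
    assume "Suc n \<in> fst`Q" then obtain p where "p \<in> Q" "Suc n = fst p" by (rule imageE)
    then show False using h by metis
  next
    assume "Suc n \<in> snd`Q" then obtain p where "p \<in> Q" "Suc n = snd p" by (rule imageE)
    then show False using h by metis
  qed
qed



lemma inj_ins: "inj_on f Q \<Longrightarrow> f x \<notin> f ` Q \<Longrightarrow> inj_on f (insert x Q)"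
  by (metis inj_on_insert inj_on_subset Diff_subset image_mono subsetD)

lemma LY1:
  assumes "PQ (Suc n) Q" "(a, Suc n) \<in> Q"
  shows "PQ n (Q - {(a,Suc n)}) \<and> a \<in> {1..n} - fst`(Q - {(a,Suc n)}) \<and>
    Qminus (Q - {(a,Suc n)}) = Qminus Q \<and> pry (Q - {(a,Suc n)}) = pry Q - {Suc n} \<and>
    card (Q - {(a, Suc n)}) + 1 = card Q"
proof -
  have fin: "finite Q" using PQ_finite[OF assms(1)] .
  have box: "Q \<subseteq> {1..Suc n}\<times>{1..Suc n}" and ifst: "inj_on fst Q" and isnd: "inj_on snd Q"
    and h: "hooked Q" using assms(1) unfolding PQ_def by auto
  have an: "a \<noteq> Suc n" using hookedD[OF h assms(2) assms(2)] by auto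
  have a1: "a \<in> {1..n}" using an box assms(2) by auto
  have nx: "x \<noteq> Suc n" if "(x,y) \<in> Q" for x y
  proof -
    have "y \<le> Suc n" using box that by auto
    then show ?thesis using hookedD[OF h that assms(2)] a1 by auto
  qed
  have ny: "y \<noteq> Suc n" if "(x,y) \<in> Q - {(a,Suc n)}" for x y
  proof
    assume "y = Suc n"
    then have eq: "snd (x,y) = snd (a, Suc n)" by simp
    have "(x,y) = (a, Suc n)" using inj_onD[OF isnd eq DiffD1[OF that] assms(2)] .
    with that show False by simp
  qed
  have "PQ n (Q - {(a,Suc n)})"
  proof -
    have "Q - {(a,Suc n)} \<subseteq> {1..n}\<times>{1..n}"
    proof
      fix p assume p: "p \<in> Q - {(a,Suc n)}"
      obtain x y where [simp]: "p = (x,y)" by (cases p)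
      have pq: "(x,y) \<in> Q" "(x,y) \<in> Q - {(a,Suc n)}" using p by simp_all
      have "x \<noteq> Suc n" "y \<noteq> Suc n" using nx[OF pq(1)] ny[OF pq(2)] by simp_all
      moreover have "p \<in> {1..Suc n}\<times>{1..Suc n}" using p box by blast
      ultimately show "p \<in> {1..n}\<times>{1..n}" by auto
    qed
    moreover have "inj_on fst (Q - {(a,Suc n)})" "inj_on snd (Q - {(a,Suc n)})"
      using inj_on_subset[OF ifst Diff_subset] inj_on_subset[OF isnd Diff_subset] by simp_all
    moreover have "hooked (Q - {(a,Suc n)})" using hooked_subset[OF h] by blast
    ultimately show ?thesis unfolding PQ_def by blast
  qed
  moreover have "a \<notin> fst`(Q - {(a,Suc n)})"
  proof
    assume "a \<in> fst`(Q - {(a,Suc n)})"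
    then obtain p where p: "p \<in> Q - {(a,Suc n)}" "a = fst p" by blast
    then have eq: "fst p = fst (a, Suc n)" by simp
    have "p = (a, Suc n)" using inj_onD[OF ifst eq DiffD1[OF p(1)] assms(2)] .
    with p(1) show False by simp
  qed
  moreover have "Qminus (Q - {(a,Suc n)}) = Qminus Q" using an a1 unfolding Qminus_def by auto
  moreover have "pry (Q - {(a,Suc n)}) = pry Q - {Suc n}"
    unfolding pry_def using inj_on_image_set_diff[OF isnd, of Q "{(a,Suc n)}"] assms(2) by simp
  moreover have "card (Q - {(a, Suc n)}) + 1 = card Q"
  proof -
    have "card Q > 0" using fin assms(2) card_gt_0_iff by blast
    then show ?thesis using assms(2) by (simp add: card_Diff_singleton)
  qed
  moreover note a1
  ultimately show ?thesis by (intro conjI DiffI) assumption+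
qed

lemma LY2:
  assumes "PQ n Q" "a \<in> {1..n} - fst`Q"
  shows "PQ (Suc n) (insert (a,Suc n) Q) \<and> Qminus (insert (a,Suc n) Q) = Qminus Q \<and>
    pry (insert (a,Suc n) Q) = insert (Suc n) (pry Q) \<and> card (insert (a, Suc n) Q) = card Q + 1 \<and> (a,Suc n) \<notin> Q"
proof -
  have fin: "finite Q" using PQ_finite[OF assms(1)] .
  have box: "Q \<subseteq> {1..n}\<times>{1..n}" and ifst: "inj_on fst Q" and isnd: "inj_on snd Q"
    and h: "hooked Q" using assms(1) unfolding PQ_def by auto
  have bx: "fst p \<le> n" "snd p \<le> n" if "p \<in> Q" for p using box that by auto
  have nin: "(a,Suc n) \<notin> Q"
  proof
    assume "(a,Suc n) \<in> Q" then have "snd (a,Suc n) \<le> n" by (rule bx)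
    then show False by simp
  qed
  have "PQ (Suc n) (insert (a,Suc n) Q)"
    unfolding PQ_def
  proof (intro conjI)
    show "insert (a, Suc n) Q \<subseteq> {1..Suc n} \<times> {1..Suc n}" using box assms(2) by auto
    show "inj_on fst (insert (a, Suc n) Q)" using ifst assms(2) by (intro inj_ins) auto
    have "Suc n \<notin> snd ` Q"
    proof
      assume "Suc n \<in> snd ` Q" then obtain p where "p \<in> Q" "Suc n = snd p" by (rule imageE)
      moreover from this(1) have "snd p \<le> n" by (rule bx)
      ultimately show False by simp
    qed
    then show "inj_on snd (insert (a, Suc n) Q)" using isnd by (intro inj_ins) auto
    show "hooked (insert (a, Suc n) Q)"
    proof (rule hooked_insert[OF h])
      show "snd (a, Suc n) \<le> fst (a, Suc n) \<Longrightarrow> \<forall>q\<in>Q. fst q \<le> snd q \<longrightarrow> fst (a, Suc n) \<noteq> snd q"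
        using assms(2) by simp
      show "\<forall>p\<in>Q. snd p \<le> fst p \<longrightarrow> fst p \<noteq> snd (a, Suc n)"
      proof (intro ballI impI)
        fix p assume "p \<in> Q" then have "fst p \<le> n" by (rule bx)
        then show "fst p \<noteq> snd (a, Suc n)" by simp
      qed
      show "fst (a, Suc n) \<noteq> snd (a, Suc n)" using assms(2) by simp
    qed
  qed
  moreover have "Qminus (insert (a,Suc n) Q) = Qminus Q" using assms(2) unfolding Qminus_def by auto
  moreover have "pry (insert (a,Suc n) Q) = insert (Suc n) (pry Q)" unfolding pry_def by simp
  moreover have "card (insert (a, Suc n) Q) = card Q + 1" using fin nin by simp
  moreover note nin
  ultimately show ?thesis by (intro conjI DiffI) assumption+
qed

lemma LX1:
  assumes "PQ (Suc n) Q" "(Suc n, b) \<in> Q"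
  shows "PQ n (Q - {(Suc n,b)}) \<and> b \<in> {1..n} - snd`(Q - {(Suc n,b)}) \<and>
    Qminus (Q - {(Suc n,b)}) = Qminus Q - {(Suc n,b)} \<and> (Suc n,b) \<in> Qminus Q \<and>
    pry (Q - {(Suc n,b)}) = pry Q - {b} \<and> card (Q - {(Suc n,b)}) + 1 = card Q"
proof -
  have fin: "finite Q" using PQ_finite[OF assms(1)] .
  have box: "Q \<subseteq> {1..Suc n}\<times>{1..Suc n}" and ifst: "inj_on fst Q" and isnd: "inj_on snd Q"
    and h: "hooked Q" using assms(1) unfolding PQ_def by auto
  have bn: "b \<noteq> Suc n" using hookedD[OF h assms(2) assms(2)] by auto
  have b1: "b \<in> {1..n}" using bn box assms(2) by auto
  have ny: "y \<noteq> Suc n" if "(x,y) \<in> Q" for x y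
  proof -
    have "x \<le> Suc n" using box that by auto
    then show ?thesis using hookedD[OF h assms(2) that] b1 by auto
  qed
  have nx: "x \<noteq> Suc n" if "(x,y) \<in> Q - {(Suc n,b)}" for x y
  proof
    assume "x = Suc n"
    then have eq: "fst (x,y) = fst (Suc n, b)" by simp
    have "(x,y) = (Suc n, b)" using inj_onD[OF ifst eq DiffD1[OF that] assms(2)] .
    with that show False by simp
  qed
  have "PQ n (Q - {(Suc n,b)})"
  proof -
    have "Q - {(Suc n,b)} \<subseteq> {1..n}\<times>{1..n}"
    proof
      fix p assume p: "p \<in> Q - {(Suc n,b)}"
      obtain x y where [simp]: "p = (x,y)" by (cases p)
      have pq: "(x,y) \<in> Q" "(x,y) \<in> Q - {(Suc n,b)}" using p by simp_all
      have "x \<noteq> Suc n" "y \<noteq> Suc n" using nx[OF pq(2)] ny[OF pq(1)] by simp_all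
      moreover have "p \<in> {1..Suc n}\<times>{1..Suc n}" using p box by blast
      ultimately show "p \<in> {1..n}\<times>{1..n}" by auto
    qed
    moreover have "inj_on fst (Q - {(Suc n,b)})" "inj_on snd (Q - {(Suc n,b)})"
      using inj_on_subset[OF ifst Diff_subset] inj_on_subset[OF isnd Diff_subset] by simp_all
    moreover have "hooked (Q - {(Suc n,b)})" using hooked_subset[OF h] by blast
    ultimately show ?thesis unfolding PQ_def by blast
  qed
  moreover have "b \<notin> snd`(Q - {(Suc n,b)})"
  proof
    assume "b \<in> snd`(Q - {(Suc n,b)})"
    then obtain p where p: "p \<in> Q - {(Suc n,b)}" "b = snd p" by blast
    then have eq: "snd p = snd (Suc n, b)" by simp
    have "p = (Suc n, b)" using inj_onD[OF isnd eq DiffD1[OF p(1)] assms(2)] .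
    with p(1) show False by simp
  qed
  moreover have "Qminus (Q - {(Suc n,b)}) = Qminus Q - {(Suc n,b)}" unfolding Qminus_def by auto
  moreover have "(Suc n,b) \<in> Qminus Q" using assms(2) b1 unfolding Qminus_def by auto
  moreover have "pry (Q - {(Suc n,b)}) = pry Q - {b}"
    unfolding pry_def using inj_on_image_set_diff[OF isnd, of Q "{(Suc n,b)}"] assms(2) by simp
  moreover have "card (Q - {(Suc n,b)}) + 1 = card Q"
  proof -
    have "card Q > 0" using fin assms(2) card_gt_0_iff by blast
    then show ?thesis using assms(2) by (simp add: card_Diff_singleton)
  qed
  moreover note b1
  ultimately show ?thesis by (intro conjI DiffI) assumption+
qed

lemma LX2:
  assumes "PQ n Q" "b \<in> {1..n} - snd`Q"
  shows "PQ (Suc n) (insert (Suc n,b) Q) \<and> Qminus (insert (Suc n,b) Q) = insert (Suc n,b) (Qminus Q) \<and>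
    (Suc n,b) \<notin> Qminus Q \<and>
    pry (insert (Suc n,b) Q) = insert b (pry Q) \<and> card (insert (Suc n,b) Q) = card Q + 1 \<and> (Suc n,b) \<notin> Q"
proof -
  have fin: "finite Q" using PQ_finite[OF assms(1)] .
  have box: "Q \<subseteq> {1..n}\<times>{1..n}" and ifst: "inj_on fst Q" and isnd: "inj_on snd Q"
    and h: "hooked Q" using assms(1) unfolding PQ_def by auto
  have bx: "fst p \<le> n" "snd p \<le> n" if "p \<in> Q" for p using box that by auto
  have nin: "(Suc n,b) \<notin> Q"
  proof
    assume "(Suc n,b) \<in> Q" then have "fst (Suc n,b) \<le> n" by (rule bx)
    then show False by simp
  qed
  have "PQ (Suc n) (insert (Suc n,b) Q)"
    unfolding PQ_def
  proof (intro conjI)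
    show "insert (Suc n,b) Q \<subseteq> {1..Suc n} \<times> {1..Suc n}" using box assms(2) by auto
    have "Suc n \<notin> fst ` Q"
    proof
      assume "Suc n \<in> fst ` Q" then obtain p where "p \<in> Q" "Suc n = fst p" by (rule imageE)
      moreover from this(1) have "fst p \<le> n" by (rule bx)
      ultimately show False by simp
    qed
    then show "inj_on fst (insert (Suc n,b) Q)" using ifst by (intro inj_ins) auto
    show "inj_on snd (insert (Suc n,b) Q)" using isnd assms(2) by (intro inj_ins) auto
    show "hooked (insert (Suc n,b) Q)"
    proof (rule hooked_insert[OF h])
      show "\<forall>q\<in>Q. fst q \<le> snd q \<longrightarrow> fst (Suc n,b) \<noteq> snd q"
      proof (intro ballI impI)
        fix q assume "q \<in> Q" then have "snd q \<le> n" by (rule bx)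
        then show "fst (Suc n,b) \<noteq> snd q" by simp
      qed
      show "fst (Suc n,b) \<le> snd (Suc n,b) \<Longrightarrow> \<forall>p\<in>Q. snd p \<le> fst p \<longrightarrow> fst p \<noteq> snd (Suc n,b)"
        using assms(2) by simp
      show "fst (Suc n,b) \<noteq> snd (Suc n,b)" using assms(2) by simp
    qed
  qed
  moreover have "Qminus (insert (Suc n,b) Q) = insert (Suc n,b) (Qminus Q)" using assms(2) unfolding Qminus_def by auto
  moreover have "pry (insert (Suc n,b) Q) = insert b (pry Q)" unfolding pry_def by simp
  moreover have "card (insert (Suc n,b) Q) = card Q + 1" using fin nin by simp
  moreover have "(Suc n,b) \<notin> Qminus Q" using nin unfolding Qminus_def by auto
  moreover note nin
  ultimately show ?thesis by (intro conjI DiffI) assumption+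
qed



lemma Qminus_sub: "Qminus Q \<subseteq> Q" by (auto simp: Qminus_def)

lemma card_fstc: "PQ n Q \<Longrightarrow> card ({1..n} - fst`Q) = n - card Q"
proof -
  assume a: "PQ n Q"
  then have "finite (fst`Q)" "fst`Q \<subseteq> {1..n}" "card (fst`Q) = card Q"
    using PQ_finite[OF a] unfolding PQ_def by (auto simp: card_image)
  then show ?thesis by (simp add: card_Diff_subset)
qed

lemma card_sndc: "PQ n Q \<Longrightarrow> card ({1..n} - snd`Q) = n - card Q"
proof -
  assume a: "PQ n Q"
  then have "finite (snd`Q)" "snd`Q \<subseteq> {1..n}" "card (snd`Q) = card Q"
    using PQ_finite[OF a] unfolding PQ_def by (auto simp: card_image)
  then show ?thesis by (simp add: card_Diff_subset)
qed

lemma ins_inj: "insert x A = insert y B \<Longrightarrow> x \<notin> B \<Longrightarrow> x \<notin> A \<Longrightarrow> y \<notin> B \<Longrightarrow> x = y \<and> A = B"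
  by (metis insert_ident insert_iff)

lemma S_I: "PQ n Q1 \<Longrightarrow> PQ n Q2 \<Longrightarrow> card Q1 + k = n \<Longrightarrow> card Q2 + k = n \<Longrightarrow>
  Qminus Q1 = Qminus Q2 \<Longrightarrow> card (Qminus Q1) = i \<Longrightarrow> pry Q1 = pry Q2 \<Longrightarrow> (Q1,Q2) \<in> S n k i"
  unfolding S_def by simp

lemma S_D: assumes "(Q1,Q2) \<in> S n k i"
  shows "PQ n Q1" "PQ n Q2" "card Q1 + k = n" "card Q2 + k = n"
  "Qminus Q1 = Qminus Q2" "card (Qminus Q1) = i" "pry Q1 = pry Q2"
  using assms unfolding S_def by blast+


lemmas LY1s = LY1[THEN conjunct1] LY1[THEN conjunct2, THEN conjunct1] LY1[THEN conjunct2, THEN conjunct2, THEN conjunct1] LY1[THEN conjunct2, THEN conjunct2, THEN conjunct2, THEN conjunct1] LY1[THEN conjunct2, THEN conjunct2, THEN conjunct2, THEN conjunct2]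
lemmas LY2s = LY2[THEN conjunct1] LY2[THEN conjunct2, THEN conjunct1] LY2[THEN conjunct2, THEN conjunct2, THEN conjunct1] LY2[THEN conjunct2, THEN conjunct2, THEN conjunct2, THEN conjunct1] LY2[THEN conjunct2, THEN conjunct2, THEN conjunct2, THEN conjunct2]
lemmas LX1s = LX1[THEN conjunct1] LX1[THEN conjunct2, THEN conjunct1] LX1[THEN conjunct2, THEN conjunct2, THEN conjunct1] LX1[THEN conjunct2, THEN conjunct2, THEN conjunct2, THEN conjunct1] LX1[THEN conjunct2, THEN conjunct2, THEN conjunct2, THEN conjunct2, THEN conjunct1] LX1[THEN conjunct2, THEN conjunct2, THEN conjunct2, THEN conjunct2, THEN conjunct2]
lemmas LX2s = LX2[THEN conjunct1] LX2[THEN conjunct2, THEN conjunct1] LX2[THEN conjunct2, THEN conjunct2, THEN conjunct1] LX2[THEN conjunct2, THEN conjunct2, THEN conjunct2, THEN conjunct1] LX2[THEN conjunct2, THEN conjunct2, THEN conjunct2, THEN conjunct2, THEN conjunct1] LX2[THEN conjunct2, THEN conjunct2, THEN conjunct2, THEN conjunct2, THEN conjunct2]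

lemma card_A: "card {p \<in> S (Suc n) k i. Suc n \<notin> fst`fst p \<and> Suc n \<notin> snd`fst p \<and> Suc n \<notin> fst`snd p \<and> Suc n \<notin> snd`snd p}
   = (if k = 0 then 0 else card (S n (k-1) i))"
proof (cases "k = 0")
  case True
  have F: False if "(Q1,Q2) \<in> S (Suc n) k i" "Suc n \<notin> fst`Q1" "Suc n \<notin> snd`Q1" for Q1 Q2
  proof -
    note s = S_D[OF that(1)]
    have "PQ n Q1" using PQ_shrink[OF s(1) that(2,3)] .
    then have "card Q1 \<le> n" by (rule PQ_card)
    then show False using s(3) True by simp
  qed
  have e: "{p \<in> S (Suc n) k i. Suc n \<notin> fst`fst p \<and> Suc n \<notin> snd`fst p \<and> Suc n \<notin> fst`snd p \<and> Suc n \<notin> snd`snd p} = {}"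
  proof (rule equals0I)
    fix p :: "(nat \<times> nat) set \<times> (nat \<times> nat) set" assume p: "p \<in> {p \<in> S (Suc n) k i. Suc n \<notin> fst`fst p \<and> Suc n \<notin> snd`fst p \<and> Suc n \<notin> fst`snd p \<and> Suc n \<notin> snd`snd p}"
    obtain Q1 Q2 where pp: "p = (Q1,Q2)" by (cases p)
    have "(Q1,Q2) \<in> S (Suc n) k i" "Suc n \<notin> fst`Q1" "Suc n \<notin> snd`Q1" using p unfolding pp by simp_all
    then show False by (rule F)
  qed
  show ?thesis unfolding e using True by simp
next
  case False
  have e: "{p \<in> S (Suc n) k i. Suc n \<notin> fst`fst p \<and> Suc n \<notin> snd`fst p \<and> Suc n \<notin> fst`snd p \<and> Suc n \<notin> snd`snd p} = S n (k-1) i"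
  proof (rule set_eqI)
    fix p :: "(nat \<times> nat) set \<times> (nat \<times> nat) set"
    obtain Q1 Q2 where pp: "p = (Q1,Q2)" by (cases p)
    show "p \<in> {p \<in> S (Suc n) k i. Suc n \<notin> fst`fst p \<and> Suc n \<notin> snd`fst p \<and> Suc n \<notin> fst`snd p \<and> Suc n \<notin> snd`snd p} \<longleftrightarrow> p \<in> S n (k-1) i"
    proof
      assume "p \<in> {p \<in> S (Suc n) k i. Suc n \<notin> fst`fst p \<and> Suc n \<notin> snd`fst p \<and> Suc n \<notin> fst`snd p \<and> Suc n \<notin> snd`snd p}"
      then have a: "(Q1,Q2) \<in> S (Suc n) k i" "Suc n \<notin> fst`Q1" "Suc n \<notin> snd`Q1" "Suc n \<notin> fst`Q2" "Suc n \<notin> snd`Q2"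
        unfolding pp by simp_all
      note s = S_D[OF a(1)]
      show "p \<in> S n (k-1) i" unfolding pp
        by (rule S_I[OF PQ_shrink[OF s(1) a(2,3)] PQ_shrink[OF s(2) a(4,5)]]) (use s False in simp_all)
    next
      assume "p \<in> S n (k-1) i"
      then have a: "(Q1,Q2) \<in> S n (k-1) i" unfolding pp .
      note s = S_D[OF a]
      have "(Q1,Q2) \<in> S (Suc n) k i"
        by (rule S_I[OF PQ_mono[OF s(1)] PQ_mono[OF s(2)]]) (use s False in simp_all)
      then show "p \<in> {p \<in> S (Suc n) k i. Suc n \<notin> fst`fst p \<and> Suc n \<notin> snd`fst p \<and> Suc n \<notin> fst`snd p \<and> Suc n \<notin> snd`snd p}"
        unfolding pp using PQ_notin[OF s(1)] PQ_notin[OF s(2)] by simp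
    qed
  qed
  show ?thesis unfolding e using False by simp
qed

lemma card_B: "card {p \<in> S (Suc n) k i. Suc n \<in> snd`fst p} = k * k * card (S n k i)"
proof -
  define f where "f = (\<lambda>((Q1::(nat\<times>nat) set,Q2::(nat\<times>nat) set),(a1::nat,a2::nat)). (insert (a1,Suc n) Q1, insert (a2,Suc n) Q2))"
  define D where "D = Sigma (S n k i) (\<lambda>(Q1,Q2). ({1..n}-fst`Q1) \<times> ({1..n}-fst`Q2))"
  have "{p \<in> S (Suc n) k i. Suc n \<in> snd`fst p} \<subseteq> f ` D"
  proof
    fix p :: "(nat \<times> nat) set \<times> (nat \<times> nat) set" assume p: "p \<in> {p \<in> S (Suc n) k i. Suc n \<in> snd`fst p}"
    obtain Q1 Q2 where pp: "p = (Q1,Q2)" by (cases p)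
    have a: "(Q1,Q2) \<in> S (Suc n) k i" "Suc n \<in> snd`Q1" using p unfolding pp by simp_all
    note s = S_D[OF a(1)]
    obtain a1 where a1: "(a1, Suc n) \<in> Q1" using a(2) by force
    have "Suc n \<in> snd`Q2" using a(2) s(7) unfolding pry_def by simp
    then obtain a2 where a2: "(a2, Suc n) \<in> Q2" by force
    note L1 = LY1s[OF s(1) a1] and L2 = LY1s[OF s(2) a2]
    have m: "(Q1 - {(a1,Suc n)}, Q2 - {(a2,Suc n)}) \<in> S n k i"
    proof (rule S_I)
      show "PQ n (Q1 - {(a1,Suc n)})" "PQ n (Q2 - {(a2,Suc n)})" using L1(1) L2(1) by blast+
      show "card (Q1 - {(a1,Suc n)}) + k = n" using L1 s(3) by linarith
      show "card (Q2 - {(a2,Suc n)}) + k = n" using L2 s(4) by linarith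
      show "Qminus (Q1 - {(a1,Suc n)}) = Qminus (Q2 - {(a2,Suc n)})" using L1 L2 s(5) by simp
      show "card (Qminus (Q1 - {(a1,Suc n)})) = i" using L1 s(6) by simp
      show "pry (Q1 - {(a1,Suc n)}) = pry (Q2 - {(a2,Suc n)})" using L1 L2 s(7) by simp
    qed
    have "a1 \<in> {1..n} - fst`(Q1 - {(a1,Suc n)})" "a2 \<in> {1..n} - fst`(Q2 - {(a2,Suc n)})"
      using L1(2) L2(2) by blast+
    then have "((Q1 - {(a1,Suc n)}, Q2 - {(a2,Suc n)}), (a1,a2)) \<in> D" unfolding D_def using m by simp
    moreover have "f ((Q1 - {(a1,Suc n)}, Q2 - {(a2,Suc n)}), (a1,a2)) = p"
      unfolding f_def pp using a1 a2 by (simp add: insert_absorb)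
    ultimately show "p \<in> f ` D" by (metis image_eqI)
  qed
  moreover have "f ` D \<subseteq> {p \<in> S (Suc n) k i. Suc n \<in> snd`fst p}"
  proof
    fix p assume "p \<in> f ` D"
    then obtain Q1 Q2 a1 a2 where x: "((Q1,Q2),(a1,a2)) \<in> D" and p: "p = f ((Q1,Q2),(a1,a2))" by auto
    have m: "(Q1,Q2) \<in> S n k i" and a12: "a1 \<in> {1..n} - fst`Q1" "a2 \<in> {1..n} - fst`Q2"
      using x unfolding D_def by simp_all
    note s = S_D[OF m]
    note L1 = LY2s[OF s(1) a12(1)] and L2 = LY2s[OF s(2) a12(2)]
    have "(insert (a1,Suc n) Q1, insert (a2,Suc n) Q2) \<in> S (Suc n) k i"
    proof (rule S_I)
      show "PQ (Suc n) (insert (a1,Suc n) Q1)" "PQ (Suc n) (insert (a2,Suc n) Q2)" using L1(1) L2(1) by blast+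
      show "card (insert (a1,Suc n) Q1) + k = Suc n" using L1 s(3) by linarith
      show "card (insert (a2,Suc n) Q2) + k = Suc n" using L2 s(4) by linarith
      show "Qminus (insert (a1,Suc n) Q1) = Qminus (insert (a2,Suc n) Q2)" using L1 L2 s(5) by simp
      show "card (Qminus (insert (a1,Suc n) Q1)) = i" using L1 s(6) by simp
      show "pry (insert (a1,Suc n) Q1) = pry (insert (a2,Suc n) Q2)" using L1 L2 s(7) by simp
    qed
    then show "p \<in> {p \<in> S (Suc n) k i. Suc n \<in> snd`fst p}" unfolding p f_def by simp
  qed
  ultimately have BD: "{p \<in> S (Suc n) k i. Suc n \<in> snd`fst p} = f ` D" by blast
  have "inj_on f D"
  proof (rule inj_onI)
    fix x y assume x: "x \<in> D" and y: "y \<in> D" and e: "f x = f y"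
    obtain Q1 Q2 a1 a2 where xx: "x = ((Q1,Q2),(a1,a2))" by (metis prod.collapse)
    obtain R1 R2 b1 b2 where yy: "y = ((R1,R2),(b1,b2))" by (metis prod.collapse)
    have m: "(Q1,Q2) \<in> S n k i" "(R1,R2) \<in> S n k i" using x y unfolding xx yy D_def by simp_all
    have s: "PQ n Q1" "PQ n Q2" "PQ n R1" "PQ n R2" using S_D(1,2)[OF m(1)] S_D(1,2)[OF m(2)] by simp_all
    have nin: "(c, Suc n) \<notin> Q" if "PQ n Q" for c Q using PQ_notin[OF that] by force
    have e1: "insert (a1,Suc n) Q1 = insert (b1,Suc n) R1" and e2: "insert (a2,Suc n) Q2 = insert (b2,Suc n) R2"
      using e unfolding xx yy f_def by simp_all
    have "(a1,Suc n) = (b1,Suc n) \<and> Q1 = R1" by (rule ins_inj[OF e1 nin[OF s(3)] nin[OF s(1)] nin[OF s(3)]])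
    moreover have "(a2,Suc n) = (b2,Suc n) \<and> Q2 = R2" by (rule ins_inj[OF e2 nin[OF s(4)] nin[OF s(2)] nin[OF s(4)]])
    ultimately show "x = y" unfolding xx yy by simp
  qed
  then have "card (f ` D) = card D" by (rule card_image)
  also have "card D = (\<Sum>q\<in>S n k i. card (case q of (Q1,Q2) \<Rightarrow> ({1..n}-fst`Q1) \<times> ({1..n}-fst`Q2)))"
    unfolding D_def
  proof (rule card_SigmaI[OF S_finite], rule ballI)
    fix q show "finite (case q of (Q1,Q2) \<Rightarrow> ({1..n}-fst`Q1) \<times> ({1..n}-fst`Q2))"
      by (cases q) (simp add: finite_cartesian_product)
  qed
  also have "\<dots> = (\<Sum>q\<in>S n k i. k * k)"
  proof (rule sum.cong)
    fix q assume q: "q \<in> S n k i"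
    obtain Q1 Q2 where qq: "q = (Q1,Q2)" by (cases q)
    note s = S_D[OF q[unfolded qq]]
    have "card ({1..n}-fst`Q1) = k" "card ({1..n}-fst`Q2) = k"
      using card_fstc[OF s(1)] card_fstc[OF s(2)] s(3,4) by simp_all
    then show "card (case q of (Q1,Q2) \<Rightarrow> ({1..n}-fst`Q1) \<times> ({1..n}-fst`Q2)) = k * k"
      unfolding qq by (simp add: card_cartesian_product)
  qed simp
  finally show ?thesis using BD by simp
qed

lemma card_C: "card {p \<in> S (Suc n) k i. Suc n \<in> fst`fst p} = (if i = 0 then 0 else k * card (S n k (i-1)))"
proof (cases "i = 0")
  case True
  have F: False if "(Q1,Q2) \<in> S (Suc n) k i" "(Suc n, b) \<in> Q1" for Q1 Q2 b
  proof -
    note s = S_D[OF that(1)]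
    have "(Suc n, b) \<in> Qminus Q1" using LX1s(4)[OF s(1) that(2)] .
    moreover have "finite (Qminus Q1)" using PQ_finite[OF s(1)] Qminus_sub finite_subset by blast
    ultimately have "card (Qminus Q1) > 0" using card_gt_0_iff by blast
    then show False using s(6) True by simp
  qed
  have e: "{p \<in> S (Suc n) k i. Suc n \<in> fst`fst p} = {}"
  proof (rule equals0I)
    fix p :: "(nat \<times> nat) set \<times> (nat \<times> nat) set" assume p: "p \<in> {p \<in> S (Suc n) k i. Suc n \<in> fst`fst p}"
    obtain Q1 Q2 where pp: "p = (Q1,Q2)" by (cases p)
    have a: "(Q1,Q2) \<in> S (Suc n) k i" "Suc n \<in> fst`Q1" using p unfolding pp by simp_all
    obtain b where "(Suc n, b) \<in> Q1" using a(2) by force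
    then show False by (rule F[OF a(1)])
  qed
  show ?thesis unfolding e using True by simp
next
  case False
  define f where "f = (\<lambda>((Q1::(nat\<times>nat) set,Q2::(nat\<times>nat) set),b::nat). (insert (Suc n,b) Q1, insert (Suc n,b) Q2))"
  define D where "D = Sigma (S n k (i-1)) (\<lambda>(Q1,Q2). {1..n}-snd`Q1)"
  have "{p \<in> S (Suc n) k i. Suc n \<in> fst`fst p} \<subseteq> f ` D"
  proof
    fix p :: "(nat \<times> nat) set \<times> (nat \<times> nat) set" assume p: "p \<in> {p \<in> S (Suc n) k i. Suc n \<in> fst`fst p}"
    obtain Q1 Q2 where pp: "p = (Q1,Q2)" by (cases p)
    have a: "(Q1,Q2) \<in> S (Suc n) k i" "Suc n \<in> fst`Q1" using p unfolding pp by simp_all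
    note s = S_D[OF a(1)]
    obtain b where b1: "(Suc n, b) \<in> Q1" using a(2) by force
    note L1 = LX1s[OF s(1) b1]
    have "(Suc n, b) \<in> Qminus Q2" using L1(4) s(5) by simp
    then have b2: "(Suc n, b) \<in> Q2" using Qminus_sub by blast
    note L2 = LX1s[OF s(2) b2]
    have fm: "finite (Qminus Q1)" using PQ_finite[OF s(1)] Qminus_sub finite_subset by blast
    have bm: "(Suc n, b) \<in> Qminus Q1" using L1(4) .
    have cm: "card (Qminus Q1 - {(Suc n, b)}) = i - 1" using bm s(6) fm by (simp add: card_Diff_singleton)
    have m: "(Q1 - {(Suc n,b)}, Q2 - {(Suc n,b)}) \<in> S n k (i-1)"
    proof (rule S_I)
      show "PQ n (Q1 - {(Suc n,b)})" "PQ n (Q2 - {(Suc n,b)})" using L1(1) L2(1) by blast+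
      show "card (Q1 - {(Suc n,b)}) + k = n" using L1 s(3) by linarith
      show "card (Q2 - {(Suc n,b)}) + k = n" using L2 s(4) by linarith
      show "Qminus (Q1 - {(Suc n,b)}) = Qminus (Q2 - {(Suc n,b)})" using L1 L2 s(5) by simp
      show "card (Qminus (Q1 - {(Suc n,b)})) = i - 1" using L1 cm by simp
      show "pry (Q1 - {(Suc n,b)}) = pry (Q2 - {(Suc n,b)})" using L1 L2 s(7) by simp
    qed
    have "b \<in> {1..n} - snd`(Q1 - {(Suc n,b)})" using L1(2) .
    then have "((Q1 - {(Suc n,b)}, Q2 - {(Suc n,b)}), b) \<in> D" unfolding D_def using m by simp
    moreover have "f ((Q1 - {(Suc n,b)}, Q2 - {(Suc n,b)}), b) = p"
      unfolding f_def pp using b1 b2 by (simp add: insert_absorb)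
    ultimately show "p \<in> f ` D" by (metis image_eqI)
  qed
  moreover have "f ` D \<subseteq> {p \<in> S (Suc n) k i. Suc n \<in> fst`fst p}"
  proof
    fix p assume "p \<in> f ` D"
    then obtain Q1 Q2 b where x: "((Q1,Q2),b) \<in> D" and p: "p = f ((Q1,Q2),b)" by auto
    have m: "(Q1,Q2) \<in> S n k (i-1)" and b1: "b \<in> {1..n} - snd`Q1"
      using x unfolding D_def by simp_all
    note s = S_D[OF m]
    have b2: "b \<in> {1..n} - snd`Q2" using s(7) b1 unfolding pry_def by simp
    note L1 = LX2s[OF s(1) b1] and L2 = LX2s[OF s(2) b2]
    have fm: "finite (Qminus Q1)" using PQ_finite[OF s(1)] Qminus_sub finite_subset by blast
    have "(insert (Suc n,b) Q1, insert (Suc n,b) Q2) \<in> S (Suc n) k i"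
    proof (rule S_I)
      show "PQ (Suc n) (insert (Suc n,b) Q1)" "PQ (Suc n) (insert (Suc n,b) Q2)" using L1(1) L2(1) by blast+
      show "card (insert (Suc n,b) Q1) + k = Suc n" using L1 s(3) by linarith
      show "card (insert (Suc n,b) Q2) + k = Suc n" using L2 s(4) by linarith
      show "Qminus (insert (Suc n,b) Q1) = Qminus (insert (Suc n,b) Q2)" using L1 L2 s(5) by simp
      have "card (insert (Suc n,b) (Qminus Q1)) = i" using L1 s(6) fm False by simp
      then show "card (Qminus (insert (Suc n,b) Q1)) = i" using L1 by simp
      show "pry (insert (Suc n,b) Q1) = pry (insert (Suc n,b) Q2)" using L1 L2 s(7) by simp
    qed
    then show "p \<in> {p \<in> S (Suc n) k i. Suc n \<in> fst`fst p}" unfolding p f_def by simp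
  qed
  ultimately have BD: "{p \<in> S (Suc n) k i. Suc n \<in> fst`fst p} = f ` D" by blast
  have "inj_on f D"
  proof (rule inj_onI)
    fix x y assume x: "x \<in> D" and y: "y \<in> D" and e: "f x = f y"
    obtain Q1 Q2 a1 where xx: "x = ((Q1,Q2),a1)" by (metis prod.collapse)
    obtain R1 R2 b1 where yy: "y = ((R1,R2),b1)" by (metis prod.collapse)
    have m: "(Q1,Q2) \<in> S n k (i-1)" "(R1,R2) \<in> S n k (i-1)" using x y unfolding xx yy D_def by simp_all
    have s: "PQ n Q1" "PQ n Q2" "PQ n R1" "PQ n R2" using S_D(1,2)[OF m(1)] S_D(1,2)[OF m(2)] by simp_all
    have nin: "(Suc n, c) \<notin> Q" if "PQ n Q" for c Q using PQ_notin[OF that] by force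
    have e1: "insert (Suc n,a1) Q1 = insert (Suc n,b1) R1" and e2: "insert (Suc n,a1) Q2 = insert (Suc n,b1) R2"
      using e unfolding xx yy f_def by simp_all
    have "(Suc n,a1) = (Suc n,b1) \<and> Q1 = R1" by (rule ins_inj[OF e1 nin[OF s(3)] nin[OF s(1)] nin[OF s(3)]])
    moreover have "(Suc n,a1) = (Suc n,b1) \<and> Q2 = R2" by (rule ins_inj[OF e2 nin[OF s(4)] nin[OF s(2)] nin[OF s(4)]])
    ultimately show "x = y" unfolding xx yy by simp
  qed
  then have "card (f ` D) = card D" by (rule card_image)
  also have "card D = (\<Sum>q\<in>S n k (i-1). card (case q of (Q1,Q2) \<Rightarrow> {1..n}-snd`Q1))"
    unfolding D_def
  proof (rule card_SigmaI[OF S_finite], rule ballI)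
    fix q show "finite (case q of (Q1,Q2) \<Rightarrow> {1..n}-snd`Q1)"
      by (cases q) simp
  qed
  also have "\<dots> = (\<Sum>q\<in>S n k (i-1). k)"
  proof (rule sum.cong)
    fix q assume q: "q \<in> S n k (i-1)"
    obtain Q1 Q2 where qq: "q = (Q1,Q2)" by (cases q)
    note s = S_D[OF q[unfolded qq]]
    have "card ({1..n}-snd`Q1) = k" using card_sndc[OF s(1)] s(3) by simp
    then show "card (case q of (Q1,Q2) \<Rightarrow> {1..n}-snd`Q1) = k" unfolding qq by simp
  qed simp
  finally show ?thesis using BD False by (simp add: mult.commute)
qed



lemma S_rec: "card (S (Suc n) k i) = (if k = 0 then 0 else card (S n (k-1) i)) + k*k*card (S n k i)
   + (if i = 0 then 0 else k * card (S n k (i-1)))"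
proof -
  let ?S = "S (Suc n) k i"
  define A where "A = {p \<in> ?S. Suc n \<notin> fst`fst p \<and> Suc n \<notin> snd`fst p \<and> Suc n \<notin> fst`snd p \<and> Suc n \<notin> snd`snd p}"
  define B where "B = {p \<in> ?S. Suc n \<in> snd`fst p}"
  define C where "C = {p \<in> ?S. Suc n \<in> fst`fst p}"
  have cov: "?S = A \<union> (B \<union> C)"
  proof
    show "A \<union> (B \<union> C) \<subseteq> ?S" unfolding A_def B_def C_def by blast
    show "?S \<subseteq> A \<union> (B \<union> C)"
    proof
      fix p assume p: "p \<in> ?S"
      obtain Q1 Q2 where pp: "p = (Q1,Q2)" by (cases p)
      have s: "PQ (Suc n) Q2" "Qminus Q1 = Qminus Q2" "pry Q1 = pry Q2" using p unfolding pp S_def by auto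
      show "p \<in> A \<union> (B \<union> C)"
      proof (cases "Suc n \<in> snd`Q1 \<or> Suc n \<in> fst`Q1")
        case True then show ?thesis using p unfolding pp B_def C_def by auto
      next
        case False
        have "Suc n \<notin> snd`Q2" using False s(3) unfolding pry_def by simp
        moreover have "Suc n \<notin> fst`Q2"
        proof
          assume "Suc n \<in> fst`Q2" then obtain b where b: "(Suc n, b) \<in> Q2" by force
          have "(Suc n,b) \<in> Qminus Q1" using LX1[OF s(1) b] s(2) by simp
          then have "(Suc n,b) \<in> Q1" using Qminus_sub by blast
          then show False using False by force
        qed
        ultimately show ?thesis using p False unfolding pp A_def by auto
      qed
    qed
  qed
  have BC: "B \<inter> C = {}"
  proof (rule ccontr)
    assume "B \<inter> C \<noteq> {}" then obtain Q1 Q2 where q: "(Q1,Q2) \<in> B" "(Q1,Q2) \<in> C" by auto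
    then have s: "PQ (Suc n) Q1" unfolding B_def S_def by auto
    obtain a where a: "(a, Suc n) \<in> Q1" using q(1) unfolding B_def by force
    obtain b where b: "(Suc n, b) \<in> Q1" using q(2) unfolding C_def by force
    note L = LY1[OF s a]
    have "(Suc n, b) \<in> Q1 - {(a, Suc n)}" using b L by auto
    then show False using PQ_notin[OF conjunct1[OF L]] by force
  qed
  have AB: "A \<inter> (B \<union> C) = {}" unfolding A_def B_def C_def by blast
  have "A \<subseteq> ?S" "B \<subseteq> ?S" "C \<subseteq> ?S" unfolding A_def B_def C_def by auto
  then have fin: "finite A" "finite B" "finite C" using S_finite finite_subset by blast+
  have "card ?S = card A + (card B + card C)" unfolding cov using fin AB BC by (simp add: card_Un_disjoint)
  then show ?thesis unfolding A_def B_def C_def using card_A card_B card_C by simp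
qed

lemma JS_coeff: "0 < k \<Longrightarrow> k \<le> Suc n \<Longrightarrow> coeff (JS (Suc n) k) i =
  coeff (JS n (k-1)) i + int k * (int k * coeff (JS n k) i + (if i = 0 then 0 else coeff (JS n k) (i-1)))"
  by (cases i) (simp_all add: algebra_simps)

lemma main: "coeff (JS n k) i = int (card (S n k i))"
proof (induction n arbitrary: k i)
  case 0
  show ?case by (auto simp: S_0)
next
  case (Suc n)
  show ?case
  proof (cases "k = 0 \<or> k > Suc n")
    case True
    have c0: "card (S (Suc n) k i) = 0"
    proof (cases "k = 0")
      case True then show ?thesis using S_rec[of n k i] by simp
    next
      case False
      then have "Suc n < k" using \<open>k = 0 \<or> k > Suc n\<close> by simp
      then show ?thesis using S_big[of "Suc n" k i] by simp
    qed
    have "JS (Suc n) k = 0" using True by simp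
    then show ?thesis using c0 by simp
  next
    case False
    then have k: "0<k" "k \<le> Suc n" by auto
    show ?thesis unfolding JS_coeff[OF k] S_rec using k by (simp add: Suc.IH algebra_simps)
  qed
qed

theorem theorem8:
  fixes n k i :: nat
  assumes "1 \<le> k" and "k \<le> n" and "1 \<le> i" and "i \<le> n - k"
  shows "coeff (JS n k) i =
    int (card {(Q1, Q2). simply_hooked_qperm n k Q1 \<and> simply_hooked_qperm n k Q2 \<and>
                 Qminus Q1 = Qminus Q2 \<and> card (Qminus Q1) = i \<and> card (Qminus Q2) = i \<and>
                 pry Q1 = pry Q2})"
proof -
  have "{(Q1, Q2). simply_hooked_qperm n k Q1 \<and> simply_hooked_qperm n k Q2 \<and>
                 Qminus Q1 = Qminus Q2 \<and> card (Qminus Q1) = i \<and> card (Qminus Q2) = i \<and>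
                 pry Q1 = pry Q2} = S n k i"
    unfolding S_def by (auto simp: sh_iff[OF assms(2)])
  then show ?thesis using main by simp
qed


end
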